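(* Let $A$ and $B$ be irreducible $\{0,1\}$-matrices, neither of which is a permutation matrix. If the one-sided topological Markov shifts $(X_A,\sigma_A)$ and $(X_B,\sigma_B)$ are coded equivalent, then they are continuously orbit equivalent.
   Context: For an $N\times N$ matrix $A=[A(i,j)]_{i,j=1}^N$ with entries in $\{0,1\}$, put $\Sigma_A=\{1,\dots,N\}$ and let $X_A$ be the set of sequences $(x_n)_{n\in\mathbb{N}}$ in $\Sigma_A$ with $A(x_n,x_{n+1})=1$ for all $n$, with the product topology and the shift $\sigma_A((x_n)_n)=(x_{n+1})_n$; $(X_A,\sigma_A)$ is the one-sided topological Markov shift. $B_k(X_A)$ is the set of admissible words of length $k$ (words occurring in elements of $X_A$), $B_0(X_A)$ is the empty word, $B_*(X_A)=\bigcup_{k\ge0}B_k(X_A)$. For a word $w=w_1w_2\cdots w_\ell$ put $\sigma_A(w)=w_2\cdots w_\ell$. A code is a nonempty $\mathcal{C}\subset B_*(X_A)$ such that whenever $\omega(i_1)\cdots\omega(i_k)=\omega(j_1)\cdots\omega(j_n)$ with all $\omega(\cdot)\in\mathcal{C}$, then $n=k$ and $\omega(i_m)=\omega(j_m)$ for all $m$. A prefix code is a code in which no word is a beginning (prefix) of another. A finite prefix code $\mathcal{C}=\{\omega(1),\dots,\omega(M)\}\subset B_*(X_A)$, with $\Sigma_{A(\mathcal{C})}=\{1,\dots,M\}$, is a right Markov code for $(X_A,\sigma_A)$ if: (i) for every $\gamma\in B_*(X_A)$ there is $\eta\in B_*(X_A)$ with $\gamma\eta\in B_*(X_A)$ and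 a unique finite sequence $(i_1,\dots,i_k)$ in $\Sigma_{A(\mathcal{C})}$ with $\gamma\eta=\omega(i_1)\cdots\omega(i_k)$; (ii) there is $L\in\mathbb{N}$ such that for all $i_1,\dots,i_L\in\Sigma_{A(\mathcal{C})}$ with $\omega(i_1)\cdots\omega(i_L)\in B_*(X_A)$ there exist $j_1,\dots,j_k\in\Sigma_{A(\mathcal{C})}$ (with $k$ depending on $(i_1,\dots,i_L)$) such that $\sigma_A(\omega(i_1))\omega(i_2)\cdots\omega(i_L)=\omega(j_1)\cdots\omega(j_k)$; (iii) for every $i,j\in\Sigma_{A(\mathcal{C})}$ there are $n_1,\dots,n_l\in\Sigma_{A(\mathcal{C})}$ with $\omega(i)\omega(n_1)\cdots\omega(n_l)\omega(j)\in B_*(X_A)$. Given a right Markov code $\mathcal{C}$, define the $M\times M$ matrix $A(\mathcal{C})(i,j)=A(r(\omega(i)),s(\omega(j)))$ where $s(\omega(i))$ and $r(\omega(i))$ are the first and last symbols of $\omega(i)$. Two shifts $(X_A,\sigma_A),(X_B,\sigma_B)$ are topologically conjugate if there is a homeomorphism $h:X_A\to X_B$ with $h\circ\sigma_A=\sigma_B\circ h$. For irreducible non-permutation $A,B$, $(X_A,\sigma_A)$ and $(X_B,\sigma_B)$ are elementary coded equivalent if there exist a right Markov code $\mathcal{C}_1$ for $(X_A,\sigma_A)$ and a right Markov code $\mathcal{C}_2$ for $(X_B,\sigma_B)$ such that $(X_{A(\mathcal{C}_1)},\sigma_{A(\mathcal{C}_1)})$ and $(X_{B(\mathcal{C}_2)},\sigma_{B(\mathcal{C}_2)})$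 are topologically conjugate; they are coded equivalent if there is a finite chain $A=A_0,A_1,\dots,A_m=B$ of irreducible non-permutation $\{0,1\}$-matrices with consecutive shifts elementary coded equivalent. $(X_A,\sigma_A)$ and $(X_B,\sigma_B)$ are continuously orbit equivalent if there exist a homeomorphism $h:X_A\to X_B$ and continuous maps $k_1,l_1:X_A\to\mathbb{Z}_+$, $k_2,l_2:X_B\to\mathbb{Z}_+$ such that $\sigma_B^{k_1(x)}(h(\sigma_A(x)))=\sigma_B^{l_1(x)}(h(x))$ for $x\in X_A$ and $\sigma_A^{k_2(y)}(h^{-1}(\sigma_B(y)))=\sigma_A^{l_2(y)}(h^{-1}(y))$ for $y\in X_B$. *)

theory Defs
  imports "HOL-Analysis.Analysis"
begin

(* An N x N {0,1}-matrix is represented by N and A :: nat => nat => bool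
   (A i j = True iff the entry (i,j) is 1); only entries with i,j in {1..N} matter.  Points of X_A are sequences nat => nat, carrying the
   product topology of the discrete space nat (instance from Function_Topology). *)

definition XA :: "nat \<Rightarrow> (nat \<Rightarrow> nat \<Rightarrow> bool) \<Rightarrow> (nat \<Rightarrow> nat) set" where
  "XA N A = {x. \<forall>n. x n \<in> {1..N} \<and> A (x n) (x (Suc n))}"

definition shift :: "(nat \<Rightarrow> nat) \<Rightarrow> (nat \<Rightarrow> nat)" where
  "shift x = (\<lambda>n. x (Suc n))"

(* irreducible: for all i,j there is n >= 1 with A^n(i,j) > 0, i.e. a path of length n from i to j *)
definition irreducible_mat :: "nat \<Rightarrow> (nat \<Rightarrow> nat \<Rightarrow> bool) \<Rightarrow> bool" where
  "irreducible_mat N A \<longleftrightarrow>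
     (\<forall>i\<in>{1..N}. \<forall>j\<in>{1..N}. \<exists>p. 2 \<le> length p \<and> hd p = i \<and> last p = j \<and>
        set p \<subseteq> {1..N} \<and> (\<forall>k < length p - 1. A (p ! k) (p ! Suc k)))"

definition permutation_mat :: "nat \<Rightarrow> (nat \<Rightarrow> nat \<Rightarrow> bool) \<Rightarrow> bool" where
  "permutation_mat N A \<longleftrightarrow>
     (\<forall>i\<in>{1..N}. \<exists>!j. j \<in> {1..N} \<and> A i j) \<and> (\<forall>j\<in>{1..N}. \<exists>!i. i \<in> {1..N} \<and> A i j)"

definition adm :: "nat \<Rightarrow> (nat \<Rightarrow> nat \<Rightarrow> bool) \<Rightarrow> nat list \<Rightarrow> bool" where
  "adm N A w \<longleftrightarrow> w = [] \<or> (\<exists>x\<in>XA N A. \<exists>i. w = map x [i..<i + length w])"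

definition is_code :: "nat \<Rightarrow> (nat \<Rightarrow> nat \<Rightarrow> bool) \<Rightarrow> nat list set \<Rightarrow> bool" where
  "is_code N A C \<longleftrightarrow> C \<noteq> {} \<and> (\<forall>w\<in>C. adm N A w) \<and>
     (\<forall>us vs. set us \<subseteq> C \<longrightarrow> set vs \<subseteq> C \<longrightarrow> concat us = concat vs \<longrightarrow> us = vs)"

definition is_prefix_code :: "nat \<Rightarrow> (nat \<Rightarrow> nat \<Rightarrow> bool) \<Rightarrow> nat list set \<Rightarrow> bool" where
  "is_prefix_code N A C \<longleftrightarrow> is_code N A C \<and>
     (\<forall>u\<in>C. \<forall>v\<in>C. u \<noteq> v \<longrightarrow> \<not> (\<exists>z. v = u @ z))"

definition right_markov_code ::
  "nat \<Rightarrow> (nat \<Rightarrow> nat \<Rightarrow> bool) \<Rightarrow> nat \<Rightarrow> (nat \<Rightarrow> nat list) \<Rightarrow> bool" where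
  "right_markov_code N A M \<omega> \<longleftrightarrow>
     inj_on \<omega> {1..M} \<and> is_prefix_code N A (\<omega> ` {1..M}) \<and>
     (\<forall>\<gamma>. adm N A \<gamma> \<longrightarrow> (\<exists>\<eta>. adm N A \<eta> \<and> adm N A (\<gamma> @ \<eta>) \<and>
          (\<exists>!is. set is \<subseteq> {1..M} \<and> \<gamma> @ \<eta> = concat (map \<omega> is)))) \<and>
     (\<exists>L\<ge>1. \<forall>is. length is = L \<longrightarrow> set is \<subseteq> {1..M} \<longrightarrow> adm N A (concat (map \<omega> is)) \<longrightarrow>
          (\<exists>js. set js \<subseteq> {1..M} \<and>
               tl (\<omega> (hd is)) @ concat (map \<omega> (tl is)) = concat (map \<omega> js))) \<and>
     (\<forall>i\<in>{1..M}. \<forall>j\<in>{1..M}. \<exists>ns. set ns \<subseteq> {1..M} \<and>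
          adm N A (\<omega> i @ concat (map \<omega> ns) @ \<omega> j))"

definition code_matrix :: "(nat \<Rightarrow> nat \<Rightarrow> bool) \<Rightarrow> (nat \<Rightarrow> nat list) \<Rightarrow> nat \<Rightarrow> nat \<Rightarrow> bool" where
  "code_matrix A \<omega> = (\<lambda>i j. A (last (\<omega> i)) (hd (\<omega> j)))"

definition top_conjugate ::
  "nat \<Rightarrow> (nat \<Rightarrow> nat \<Rightarrow> bool) \<Rightarrow> nat \<Rightarrow> (nat \<Rightarrow> nat \<Rightarrow> bool) \<Rightarrow> bool" where
  "top_conjugate N A M B \<longleftrightarrow>
     (\<exists>h g. homeomorphism (XA N A) (XA M B) h g \<and> (\<forall>x\<in>XA N A. h (shift x) = shift (h x)))"

definition elem_coded_equiv ::
  "nat \<Rightarrow> (nat \<Rightarrow> nat \<Rightarrow> bool) \<Rightarrow> nat \<Rightarrow> (nat \<Rightarrow> nat \<Rightarrow> bool) \<Rightarrow> bool" where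
  "elem_coded_equiv N A M B \<longleftrightarrow>
     irreducible_mat N A \<and> \<not> permutation_mat N A \<and>
     irreducible_mat M B \<and> \<not> permutation_mat M B \<and>
     (\<exists>M1 \<omega>1 M2 \<omega>2. right_markov_code N A M1 \<omega>1 \<and> right_markov_code M B M2 \<omega>2 \<and>
        top_conjugate M1 (code_matrix A \<omega>1) M2 (code_matrix B \<omega>2))"

definition coded_equiv ::
  "nat \<Rightarrow> (nat \<Rightarrow> nat \<Rightarrow> bool) \<Rightarrow> nat \<Rightarrow> (nat \<Rightarrow> nat \<Rightarrow> bool) \<Rightarrow> bool" where
  "coded_equiv N A M B \<longleftrightarrow>
     (\<exists>ch :: (nat \<times> (nat \<Rightarrow> nat \<Rightarrow> bool)) list. ch \<noteq> [] \<and> hd ch = (N, A) \<and> last ch = (M, B) \<and>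
        (\<forall>k < length ch. irreducible_mat (fst (ch ! k)) (snd (ch ! k)) \<and>
                          \<not> permutation_mat (fst (ch ! k)) (snd (ch ! k))) \<and>
        (\<forall>k < length ch - 1. elem_coded_equiv (fst (ch ! k)) (snd (ch ! k))
                                                (fst (ch ! Suc k)) (snd (ch ! Suc k))))"

definition cont_orbit_equiv ::
  "nat \<Rightarrow> (nat \<Rightarrow> nat \<Rightarrow> bool) \<Rightarrow> nat \<Rightarrow> (nat \<Rightarrow> nat \<Rightarrow> bool) \<Rightarrow> bool" where
  "cont_orbit_equiv N A M B \<longleftrightarrow>
     (\<exists>h g k1 l1 k2 l2. homeomorphism (XA N A) (XA M B) h g \<and>
        continuous_on (XA N A) (k1 :: (nat \<Rightarrow> nat) \<Rightarrow> nat) \<and> continuous_on (XA N A) l1 \<and>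
        continuous_on (XA M B) (k2 :: (nat \<Rightarrow> nat) \<Rightarrow> nat) \<and> continuous_on (XA M B) l2 \<and>
        (\<forall>x\<in>XA N A. (shift ^^ k1 x) (h (shift x)) = (shift ^^ l1 x) (h x)) \<and>
        (\<forall>y\<in>XA M B. (shift ^^ k2 y) (g (shift y)) = (shift ^^ l2 y) (g y)))"

end

theory Submission
  imports Defs
begin


definition cyl :: "(nat \<Rightarrow> nat) \<Rightarrow> nat \<Rightarrow> (nat \<Rightarrow> nat) set" where
  "cyl x m = {y. \<forall>i<m. y i = x i}"

lemma open_cyl: "open (cyl x m)"
proof -
  have "cyl x m = Pi\<^sub>E UNIV (\<lambda>i. if i < m then {x i} else UNIV)"
    unfolding cyl_def by (auto simp: PiE_def Pi_def split: if_splits)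
  moreover have "open (Pi\<^sub>E UNIV (\<lambda>i. if i < m then {x i} else (UNIV::nat set)))"
  proof (rule open_PiE)
    show "\<And>i. open (if i < m then {x i} else (UNIV::nat set))" by (simp add: open_discrete)
    have "{i. (if i < m then {x i} else (UNIV::nat set)) \<noteq> UNIV} \<subseteq> {..<m}" by auto
    then show "finite {i. (if i < m then {x i} else (UNIV::nat set)) \<noteq> UNIV}"
      using finite_subset by blast
  qed
  ultimately show ?thesis by simp
qed

lemma x_in_cyl[simp]: "x \<in> cyl x m" by (simp add: cyl_def)

lemma open_contains_cyl:
  fixes U :: "(nat \<Rightarrow> nat) set"
  assumes "open U" "x \<in> U" shows "\<exists>m. cyl x m \<subseteq> U"
proof -
  have "openin (product_topology (\<lambda>i. euclidean) UNIV) U" "x \<in> U"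
    using assms unfolding open_fun_def by auto
  with product_topology_open_contains_basis[OF this]
  obtain X where H: "x \<in> (\<Pi>\<^sub>E i\<in>UNIV. X i)" "finite {i. X i \<noteq> UNIV}" "(\<Pi>\<^sub>E i\<in>UNIV. X i) \<subseteq> U"
    by auto
  obtain m where m: "\<forall>i\<in>{i. X i \<noteq> UNIV}. i < m"
    using H(2) finite_nat_bounded by (metis lessThan_iff subset_eq)
  have "cyl x m \<subseteq> (\<Pi>\<^sub>E i\<in>UNIV. X i)"
  proof
    fix y assume y: "y \<in> cyl x m"
    have "y i \<in> X i" for i
    proof (cases "X i = UNIV")
      case False then have "i < m" using m by auto
      then show ?thesis using y H(1) by (auto simp: cyl_def PiE_def Pi_def)
    qed auto
    then show "y \<in> (\<Pi>\<^sub>E i\<in>UNIV. X i)" by (auto simp: PiE_def Pi_def)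
  qed
  then show ?thesis using H(3) by blast
qed

definition lc :: "(nat \<Rightarrow> nat) set \<Rightarrow> ((nat \<Rightarrow> nat) \<Rightarrow> nat) \<Rightarrow> bool" where
  "lc S f \<longleftrightarrow> (\<forall>x\<in>S. \<exists>m. \<forall>y\<in>S. y \<in> cyl x m \<longrightarrow> f y = f x)"

definition cont :: "(nat \<Rightarrow> nat) set \<Rightarrow> ((nat \<Rightarrow> nat) \<Rightarrow> (nat \<Rightarrow> nat)) \<Rightarrow> bool" where
  "cont S h \<longleftrightarrow> (\<forall>x\<in>S. \<forall>n. \<exists>m. \<forall>y\<in>S. y \<in> cyl x m \<longrightarrow> h y \<in> cyl (h x) n)"

lemma lc_iff: "continuous_on S (f :: (nat \<Rightarrow> nat) \<Rightarrow> nat) \<longleftrightarrow> lc S f"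
proof
  assume c: "continuous_on S f"
  show "lc S f" unfolding lc_def
  proof
    fix x assume x: "x \<in> S"
    have o: "open {f x}" by (rule open_discrete)
    obtain A where A: "open A" "x \<in> A" "\<forall>y\<in>S. y \<in> A \<longrightarrow> f y \<in> {f x}"
      using c[unfolded continuous_on_topological, rule_format, OF x o] by blast
    obtain m where "cyl x m \<subseteq> A" using open_contains_cyl A(1,2) by blast
    then show "\<exists>m. \<forall>y\<in>S. y \<in> cyl x m \<longrightarrow> f y = f x" using A(3) by blast
  qed
next
  assume l: "lc S f"
  show "continuous_on S f" unfolding continuous_on_topological
  proof (intro ballI allI impI)
    fix x B assume "x \<in> S" "open B" "f x \<in> B"
    then obtain m where m: "\<forall>y\<in>S. y \<in> cyl x m \<longrightarrow> f y = f x" using l unfolding lc_def by blast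
    show "\<exists>A. open A \<and> x \<in> A \<and> (\<forall>y\<in>S. y \<in> A \<longrightarrow> f y \<in> B)"
      apply (rule exI[of _ "cyl x m"])
      using open_cyl x_in_cyl \<open>f x \<in> B\<close> m by simp
  qed
qed

lemma cont_iff: "continuous_on S (h :: (nat \<Rightarrow> nat) \<Rightarrow> (nat \<Rightarrow> nat)) \<longleftrightarrow> cont S h"
proof
  assume c: "continuous_on S h"
  show "cont S h" unfolding cont_def
  proof (intro ballI allI)
    fix x n assume x: "x \<in> S"
    have o: "open (cyl (h x) n)" by (rule open_cyl)
    obtain A where A: "open A" "x \<in> A" "\<forall>y\<in>S. y \<in> A \<longrightarrow> h y \<in> cyl (h x) n"
      using c[unfolded continuous_on_topological, rule_format, OF x o x_in_cyl] by blast
    obtain m where "cyl x m \<subseteq> A" using open_contains_cyl A(1,2) by blast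
    then show "\<exists>m. \<forall>y\<in>S. y \<in> cyl x m \<longrightarrow> h y \<in> cyl (h x) n" using A(3) by blast
  qed
next
  assume l: "cont S h"
  show "continuous_on S h" unfolding continuous_on_topological
  proof (intro ballI allI impI)
    fix x B assume "x \<in> S" "open B" "h x \<in> B"
    then obtain n where n: "cyl (h x) n \<subseteq> B" using open_contains_cyl by blast
    obtain m where m: "\<forall>y\<in>S. y \<in> cyl x m \<longrightarrow> h y \<in> cyl (h x) n" using l \<open>x \<in> S\<close> unfolding cont_def by blast
    show "\<exists>A. open A \<and> x \<in> A \<and> (\<forall>y\<in>S. y \<in> A \<longrightarrow> h y \<in> B)"
      apply (rule exI[of _ "cyl x m"])
      using open_cyl x_in_cyl n m by blast
  qed
qed


lemma cyl_mono: "y \<in> cyl x m \<Longrightarrow> m' \<le> m \<Longrightarrow> y \<in> cyl x m'"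
  by (auto simp: cyl_def)

lemma cyl_sym: "y \<in> cyl x m \<Longrightarrow> x \<in> cyl y m"
  by (auto simp: cyl_def)

lemma lc_const: "lc S (\<lambda>x. c)" by (auto simp: lc_def)

lemma lc_plus: assumes "lc S f" "lc S g" shows "lc S (\<lambda>x. f x + g x)"
  unfolding lc_def
proof
  fix x assume x: "x \<in> S"
  obtain m1 where m1: "\<forall>y\<in>S. y \<in> cyl x m1 \<longrightarrow> f y = f x" using assms(1) x unfolding lc_def by blast
  obtain m2 where m2: "\<forall>y\<in>S. y \<in> cyl x m2 \<longrightarrow> g y = g x" using assms(2) x unfolding lc_def by blast
  show "\<exists>m. \<forall>y\<in>S. y \<in> cyl x m \<longrightarrow> f y + g y = f x + g x"
    by (rule exI[of _ "max m1 m2"]) (metis m1 m2 cyl_mono max.cobounded1 max.cobounded2)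
qed

lemma lc_dep: assumes "lc S k" "\<And>n. lc S (G n)" shows "lc S (\<lambda>x. G (k x) x)"
  unfolding lc_def
proof
  fix x assume x: "x \<in> S"
  obtain m1 where m1: "\<forall>y\<in>S. y \<in> cyl x m1 \<longrightarrow> k y = k x" using assms(1) x unfolding lc_def by blast
  obtain m2 where m2: "\<forall>y\<in>S. y \<in> cyl x m2 \<longrightarrow> G (k x) y = G (k x) x" using assms(2) x unfolding lc_def by blast
  show "\<exists>m. \<forall>y\<in>S. y \<in> cyl x m \<longrightarrow> G (k y) y = G (k x) x"
    by (rule exI[of _ "max m1 m2"]) (metis m1 m2 cyl_mono max.cobounded1 max.cobounded2)
qed

lemma lc_comp: assumes "lc T f" "cont S h" "\<forall>x\<in>S. h x \<in> T" shows "lc S (\<lambda>x. f (h x))"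
  unfolding lc_def
proof
  fix x assume x: "x \<in> S"
  obtain n where n: "\<forall>y\<in>T. y \<in> cyl (h x) n \<longrightarrow> f y = f (h x)" using assms(1,3) x unfolding lc_def by blast
  obtain m where m: "\<forall>y\<in>S. y \<in> cyl x m \<longrightarrow> h y \<in> cyl (h x) n" using assms(2) x unfolding cont_def by blast
  show "\<exists>m. \<forall>y\<in>S. y \<in> cyl x m \<longrightarrow> f (h y) = f (h x)"
    using m n assms(3) by blast
qed

lemma cont_comp: assumes "cont T g" "cont S h" "\<forall>x\<in>S. h x \<in> T" shows "cont S (\<lambda>x. g (h x))"
  unfolding cont_def
proof (intro ballI allI)
  fix x n assume x: "x \<in> S"
  obtain n' where n: "\<forall>y\<in>T. y \<in> cyl (h x) n' \<longrightarrow> g y \<in> cyl (g (h x)) n" using assms(1,3) x unfolding cont_def by blast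
  obtain m where m: "\<forall>y\<in>S. y \<in> cyl x m \<longrightarrow> h y \<in> cyl (h x) n'" using assms(2) x unfolding cont_def by blast
  show "\<exists>m. \<forall>y\<in>S. y \<in> cyl x m \<longrightarrow> g (h y) \<in> cyl (g (h x)) n"
    using m n assms(3) by blast
qed

lemma cont_shiftn: "cont S (\<lambda>x i. x (i + n))"
  unfolding cont_def
proof (intro ballI allI)
  fix x k
  show "\<exists>m. \<forall>y\<in>S. y \<in> cyl x m \<longrightarrow> (\<lambda>i. y (i + n)) \<in> cyl (\<lambda>i. x (i + n)) k"
    by (rule exI[of _ "k + n"]) (auto simp: cyl_def)
qed

lemma shift_pow: "(shift ^^ k) x = (\<lambda>n. x (n + k))"
  by (induction k) (auto simp: shift_def)

lemma shift_eq: "shift x = (\<lambda>i. x (i + 1))" by (simp add: shift_def)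

definition sinv :: "(nat \<Rightarrow> nat) set \<Rightarrow> bool" where
  "sinv S \<longleftrightarrow> (\<forall>x\<in>S. shift x \<in> S)"

lemma sinv_pow: "sinv S \<Longrightarrow> x \<in> S \<Longrightarrow> (\<lambda>i. x (i + n)) \<in> S"
proof (induction n)
  case 0 then show ?case by simp
next
  case (Suc n)
  have "shift (\<lambda>i. x (i + n)) \<in> S" using Suc unfolding sinv_def by blast
  moreover have "shift (\<lambda>i. x (i + n)) = (\<lambda>i. x (i + Suc n))" by (simp add: shift_def)
  ultimately show ?case by simp
qed

definition half where
  "half S T h k l \<longleftrightarrow> (\<forall>x\<in>S. h x \<in> T) \<and> cont S h \<and> lc S k \<and> lc S l \<and>
     (\<forall>x\<in>S. \<forall>j. h (shift x) (j + k x) = h x (j + l x))"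

lemma half_iter:
  assumes H: "half S T h k l" and si: "sinv S"
  shows "\<exists>kn ln. lc S kn \<and> lc S ln \<and> (\<forall>x\<in>S. \<forall>j. h (\<lambda>i. x (i + n)) (j + kn x) = h x (j + ln x))"
proof (induction n)
  case 0
  show ?case by (rule exI[of _ "\<lambda>x. 0"], rule exI[of _ "\<lambda>x. 0"]) (simp add: lc_const)
next
  case (Suc n)
  then obtain kn ln where IH: "lc S kn" "lc S ln" "\<forall>x\<in>S. \<forall>j. h (\<lambda>i. x (i + n)) (j + kn x) = h x (j + ln x)"
    by blast
  have hk: "lc S k" and hl: "lc S l" and eq: "\<forall>x\<in>S. \<forall>j. h (shift x) (j + k x) = h x (j + l x)"
    using H unfolding half_def by auto
  have m: "\<forall>x\<in>S. (\<lambda>i. x (i + n)) \<in> S" using sinv_pow si by blast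
  have lk: "lc S (\<lambda>x. k (\<lambda>i. x (i + n)))" by (rule lc_comp[OF hk cont_shiftn m])
  have ll: "lc S (\<lambda>x. l (\<lambda>i. x (i + n)))" by (rule lc_comp[OF hl cont_shiftn m])
  show ?case
  proof (intro exI conjI)
    show "lc S (\<lambda>x. k (\<lambda>i. x (i + n)) + kn x)" by (rule lc_plus[OF lk IH(1)])
    show "lc S (\<lambda>x. l (\<lambda>i. x (i + n)) + ln x)" by (rule lc_plus[OF ll IH(2)])
    show "\<forall>x\<in>S. \<forall>j. h (\<lambda>i. x (i + Suc n)) (j + (k (\<lambda>i. x (i + n)) + kn x)) = h x (j + (l (\<lambda>i. x (i + n)) + ln x))"
    proof (intro ballI allI)
      fix x j assume x: "x \<in> S"
      let ?z = "\<lambda>i. x (i + n)"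
      have sz: "shift ?z = (\<lambda>i. x (i + Suc n))" by (simp add: shift_def)
      have "h (\<lambda>i. x (i + Suc n)) (j + (k ?z + kn x)) = h (shift ?z) ((j + kn x) + k ?z)"
        by (simp add: sz ac_simps)
      also have "\<dots> = h ?z ((j + kn x) + l ?z)" using eq m x by blast
      also have "\<dots> = h ?z ((j + l ?z) + kn x)" by (simp add: ac_simps)
      also have "\<dots> = h x ((j + l ?z) + ln x)" using IH(3) x by blast
      finally show "h (\<lambda>i. x (i + Suc n)) (j + (k ?z + kn x)) = h x (j + (l ?z + ln x))"
        by (simp add: ac_simps)
    qed
  qed
qed


lemma half_comp:
  assumes H1: "half S T h1 k1 l1" and H2: "half T U h2 k2 l2" and sS: "sinv S" and sT: "sinv T"
  shows "\<exists>K L. half S U (\<lambda>x. h2 (h1 x)) K L"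
proof -
  have ex: "\<forall>n. \<exists>kn ln. lc T kn \<and> lc T ln \<and> (\<forall>y\<in>T. \<forall>j. h2 (\<lambda>i. y (i + n)) (j + kn y) = h2 y (j + ln y))"
    using half_iter[OF H2 sT] by blast
  obtain a where a: "\<forall>n. \<exists>ln. lc T (a n) \<and> lc T ln \<and> (\<forall>y\<in>T. \<forall>j. h2 (\<lambda>i. y (i + n)) (j + a n y) = h2 y (j + ln y))"
    using choice[OF ex] by blast
  obtain b where b: "\<forall>n. lc T (a n) \<and> lc T (b n) \<and> (\<forall>y\<in>T. \<forall>j. h2 (\<lambda>i. y (i + n)) (j + a n y) = h2 y (j + b n y))"
    using choice[OF a] by blast
  have ab: "\<And>n. lc T (a n)" "\<And>n. lc T (b n)"
    "\<And>n y j. y \<in> T \<Longrightarrow> h2 (\<lambda>i. y (i + n)) (j + a n y) = h2 y (j + b n y)"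
    using b by blast+
  have m1: "\<forall>x\<in>S. h1 x \<in> T" and c1: "cont S h1" and lk1: "lc S k1" and ll1: "lc S l1"
    and e1: "\<forall>x\<in>S. \<forall>j. h1 (shift x) (j + k1 x) = h1 x (j + l1 x)"
    using H1 unfolding half_def by auto
  have m2: "\<forall>x\<in>T. h2 x \<in> U" and c2: "cont T h2"
    using H2 unfolding half_def by auto
  have ms: "\<forall>x\<in>S. (\<lambda>i. x (i + 1)) \<in> S" using sinv_pow[OF sS] by blast
  have cs: "cont S (\<lambda>x. h1 (\<lambda>i. x (i + 1)))" by (rule cont_comp[OF c1 cont_shiftn ms])
  have ms2: "\<forall>x\<in>S. h1 (\<lambda>i. x (i + 1)) \<in> T" using ms m1 by blast
  define K where "K = (\<lambda>x. b (k1 x) (h1 (shift x)) + a (l1 x) (h1 x))"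
  define L where "L = (\<lambda>x. b (l1 x) (h1 x) + a (k1 x) (h1 (shift x)))"
  have G1: "lc S (\<lambda>x. b (k1 x) (h1 (\<lambda>i. x (i + 1))))"
    by (rule lc_dep[OF lk1, where G="\<lambda>n x. b n (h1 (\<lambda>i. x (i + 1)))"], rule lc_comp[OF ab(2) cs ms2])
  have G2: "lc S (\<lambda>x. a (l1 x) (h1 x))"
    by (rule lc_dep[OF ll1, where G="\<lambda>n x. a n (h1 x)"], rule lc_comp[OF ab(1) c1 m1])
  have G3: "lc S (\<lambda>x. b (l1 x) (h1 x))"
    by (rule lc_dep[OF ll1, where G="\<lambda>n x. b n (h1 x)"], rule lc_comp[OF ab(2) c1 m1])
  have G4: "lc S (\<lambda>x. a (k1 x) (h1 (\<lambda>i. x (i + 1))))"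
    by (rule lc_dep[OF lk1, where G="\<lambda>n x. a n (h1 (\<lambda>i. x (i + 1)))"], rule lc_comp[OF ab(1) cs ms2])
  have lcK: "lc S K" unfolding K_def shift_eq by (rule lc_plus[OF G1 G2])
  have lcL: "lc S L" unfolding L_def shift_eq by (rule lc_plus[OF G3 G4])
  have eq: "h2 (h1 (shift x)) (j + K x) = h2 (h1 x) (j + L x)" if x: "x \<in> S" for x j
  proof -
    let ?y' = "h1 (shift x)" and ?y = "h1 x"
    have yT: "?y \<in> T" "?y' \<in> T" using m1 x sS unfolding sinv_def by auto
    have w: "(\<lambda>i. ?y' (i + k1 x)) = (\<lambda>i. ?y (i + l1 x))" using e1 x by auto
    let ?w = "\<lambda>i. ?y (i + l1 x)"
    have A1: "h2 ?w (j' + a (k1 x) ?y') = h2 ?y' (j' + b (k1 x) ?y')" for j'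
      using ab(3)[OF yT(2), of "k1 x" j'] w by simp
    have A2: "h2 ?w (j' + a (l1 x) ?y) = h2 ?y (j' + b (l1 x) ?y)" for j'
      using ab(3)[OF yT(1), of "l1 x" j'] by simp
    have "h2 ?y' (j + K x) = h2 ?y' ((j + a (l1 x) ?y) + b (k1 x) ?y')" by (simp add: K_def ac_simps)
    also have "\<dots> = h2 ?w ((j + a (l1 x) ?y) + a (k1 x) ?y')" using A1 by simp
    also have "\<dots> = h2 ?w ((j + a (k1 x) ?y') + a (l1 x) ?y)" by (simp add: ac_simps)
    also have "\<dots> = h2 ?y ((j + a (k1 x) ?y') + b (l1 x) ?y)" using A2 by simp
    also have "\<dots> = h2 ?y (j + L x)" by (simp add: L_def ac_simps)
    finally show ?thesis .
  qed
  have "half S U (\<lambda>x. h2 (h1 x)) K L"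
    unfolding half_def using m1 m2 cont_comp[OF c2 c1 m1] lcK lcL eq by auto
  then show ?thesis by blast
qed

definition COE :: "(nat \<Rightarrow> nat) set \<Rightarrow> (nat \<Rightarrow> nat) set \<Rightarrow> bool" where
  "COE S T \<longleftrightarrow> (\<exists>h g. homeomorphism S T h g \<and> (\<exists>k l. half S T h k l) \<and> (\<exists>k l. half T S g k l))"

lemma COE_sym: "COE S T \<Longrightarrow> COE T S"
  unfolding COE_def using homeomorphism_sym by blast

lemma COE_trans: assumes "COE S T" "COE T U" "sinv S" "sinv T" "sinv U" shows "COE S U"
proof -
  obtain h1 g1 k1 l1 k1' l1' where 1: "homeomorphism S T h1 g1" "half S T h1 k1 l1" "half T S g1 k1' l1'"
    using assms(1) unfolding COE_def by blast
  obtain h2 g2 k2 l2 k2' l2' where 2: "homeomorphism T U h2 g2" "half T U h2 k2 l2" "half U T g2 k2' l2'"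
    using assms(2) unfolding COE_def by blast
  have "homeomorphism S U (h2 \<circ> h1) (g1 \<circ> g2)" by (rule homeomorphism_compose[OF 1(1) 2(1)])
  moreover have "\<exists>K L. half S U (\<lambda>x. h2 (h1 x)) K L" by (rule half_comp[OF 1(2) 2(2) assms(3,4)])
  moreover have "\<exists>K L. half U S (\<lambda>x. g1 (g2 x)) K L" by (rule half_comp[OF 2(3) 1(3) assms(5,4)])
  ultimately show ?thesis unfolding COE_def comp_def by blast
qed

lemma COE_refl: "sinv S \<Longrightarrow> COE S S"
proof -
  assume s: "sinv S"
  have h: "half S S (\<lambda>x. x) (\<lambda>x. 0) (\<lambda>x. 1)"
    unfolding half_def using s by (auto simp: lc_const cont_def sinv_def shift_def)
  have "homeomorphism S S (\<lambda>x. x) (\<lambda>x. x)" by (simp add: homeomorphism_def)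
  then show ?thesis unfolding COE_def using h by blast
qed

lemma sinv_XA: "sinv (XA N A)"
  unfolding sinv_def XA_def shift_def by auto

lemma conj_COE: assumes "top_conjugate N A M B" shows "COE (XA N A) (XA M B)"
proof -
  obtain h g where hg: "homeomorphism (XA N A) (XA M B) h g" and c: "\<forall>x\<in>XA N A. h (shift x) = shift (h x)"
    using assms unfolding top_conjugate_def by blast
  have H: "\<forall>x\<in>XA N A. g (h x) = x" "h ` XA N A = XA M B" "continuous_on (XA N A) h"
       "\<forall>y\<in>XA M B. h (g y) = y" "g ` XA M B = XA N A" "continuous_on (XA M B) g"
    using hg unfolding homeomorphism_def by auto
  have cg: "g (shift y) = shift (g y)" if y: "y \<in> XA M B" for y
  proof -
    have gy: "g y \<in> XA N A" using H(5) y by blast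
    have "shift (g y) \<in> XA N A" using sinv_XA gy unfolding sinv_def by blast
    then have "g (h (shift (g y))) = shift (g y)" using H(1) by blast
    moreover have "h (shift (g y)) = shift y" using c gy H(4) y by metis
    ultimately show ?thesis by simp
  qed
  have "half (XA N A) (XA M B) h (\<lambda>x. 0) (\<lambda>x. 1)"
    unfolding half_def using H(2,3) c by (auto simp: lc_const cont_iff[symmetric] shift_def)
  moreover have "half (XA M B) (XA N A) g (\<lambda>x. 0) (\<lambda>x. 1)"
    unfolding half_def using H(5,6) cg by (auto simp: lc_const cont_iff[symmetric] shift_def)
  ultimately show ?thesis unfolding COE_def using hg by blast
qed


lemma coe_iff: "cont_orbit_equiv N A M B \<longleftrightarrow> COE (XA N A) (XA M B)"
proof -
  have e: "((shift ^^ k) (h (shift x)) = (shift ^^ l) (h x)) \<longleftrightarrow> (\<forall>j. h (shift x) (j + k) = h x (j + l))"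
    for h :: "(nat \<Rightarrow> nat) \<Rightarrow> nat \<Rightarrow> nat" and k l x
    by (simp add: shift_pow fun_eq_iff)
  show ?thesis
  proof
    assume "cont_orbit_equiv N A M B"
    then obtain h g k1 l1 k2 l2 where H: "homeomorphism (XA N A) (XA M B) h g"
      "continuous_on (XA N A) k1" "continuous_on (XA N A) l1"
      "continuous_on (XA M B) k2" "continuous_on (XA M B) l2"
      "\<forall>x\<in>XA N A. (shift ^^ k1 x) (h (shift x)) = (shift ^^ l1 x) (h x)"
      "\<forall>y\<in>XA M B. (shift ^^ k2 y) (g (shift y)) = (shift ^^ l2 y) (g y)"
      unfolding cont_orbit_equiv_def by blast
    have hh: "h ` XA N A = XA M B" "continuous_on (XA N A) h" "g ` XA M B = XA N A" "continuous_on (XA M B) g"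
      using H(1) unfolding homeomorphism_def by auto
    have e1: "\<forall>x\<in>XA N A. \<forall>j. h (shift x) (j + k1 x) = h x (j + l1 x)"
      using H(6) by (simp only: e)
    have e2: "\<forall>x\<in>XA M B. \<forall>j. g (shift x) (j + k2 x) = g x (j + l2 x)"
      using H(7) by (simp only: e)
    have "half (XA N A) (XA M B) h k1 l1"
      unfolding half_def lc_iff[symmetric] cont_iff[symmetric] using hh(1,2) H(2,3) e1 by blast
    moreover have "half (XA M B) (XA N A) g k2 l2"
      unfolding half_def lc_iff[symmetric] cont_iff[symmetric] using hh(3,4) H(4,5) e2 by blast
    ultimately show "COE (XA N A) (XA M B)" unfolding COE_def using H(1) by blast
  next
    assume "COE (XA N A) (XA M B)"
    then obtain h g k1 l1 k2 l2 where H: "homeomorphism (XA N A) (XA M B) h g"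
      "half (XA N A) (XA M B) h k1 l1" "half (XA M B) (XA N A) g k2 l2"
      unfolding COE_def by blast
    have "continuous_on (XA N A) k1" "continuous_on (XA N A) l1"
      "continuous_on (XA M B) k2" "continuous_on (XA M B) l2"
      "\<forall>x\<in>XA N A. (shift ^^ k1 x) (h (shift x)) = (shift ^^ l1 x) (h x)"
      "\<forall>y\<in>XA M B. (shift ^^ k2 y) (g (shift y)) = (shift ^^ l2 y) (g y)"
      using H(2,3) unfolding half_def lc_iff[symmetric] e by blast+
    then show "cont_orbit_equiv N A M B" unfolding cont_orbit_equiv_def using H(1) by blast
  qed
qed




definition W :: "(nat \<Rightarrow> nat list) \<Rightarrow> (nat \<Rightarrow> nat) \<Rightarrow> nat \<Rightarrow> nat list" where
  "W \<omega> y k = concat (map (\<lambda>i. \<omega> (y i)) [0..<k])"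

definition phi :: "(nat \<Rightarrow> nat list) \<Rightarrow> (nat \<Rightarrow> nat) \<Rightarrow> nat \<Rightarrow> nat" where
  "phi \<omega> y n = W \<omega> y (Suc n) ! n"

abbreviation cc :: "(nat \<Rightarrow> nat list) \<Rightarrow> nat list \<Rightarrow> nat list" where
  "cc \<omega> is \<equiv> concat (map \<omega> is)"

lemma W_0[simp]: "W \<omega> y 0 = []" by (simp add: W_def)
lemma W_Suc: "W \<omega> y (Suc k) = W \<omega> y k @ \<omega> (y k)" by (simp add: W_def)

lemma W_prefix: "k \<le> k' \<Longrightarrow> \<exists>z. W \<omega> y k' = W \<omega> y k @ z"
proof (induction k' rule: dec_induct)
  case base then show ?case by simp
next
  case (step n) then show ?case by (auto simp: W_Suc)
qed

lemma adm_props: assumes "adm N A w" shows "set w \<subseteq> {1..N}" "successively A w"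
proof -
  have "set w \<subseteq> {1..N} \<and> successively A w"
  proof (cases "w = []")
    case True then show ?thesis by simp
  next
    case False
    then obtain x i where x: "x \<in> XA N A" and w: "w = map x [i..<i + length w]"
      using assms unfolding adm_def by blast
    have "set w \<subseteq> {1..N}" using x w unfolding XA_def by (metis (no_types, lifting) ex_map_conv mem_Collect_eq subsetI)
    moreover have "successively A w"
      unfolding successively_conv_nth
    proof (intro allI impI)
      fix k assume k: "Suc k < length w"
      have "w ! k = x (i + k)" "w ! Suc k = x (Suc (i + k))"
        using k by (subst w, simp)+
      then show "A (w ! k) (w ! Suc k)" using x unfolding XA_def by auto
    qed
    ultimately show ?thesis by blast
  qed
  then show "set w \<subseteq> {1..N}" "successively A w" by auto
qed

context
  fixes N :: nat and A :: "nat \<Rightarrow> nat \<Rightarrow> bool" and M :: nat and \<omega> :: "nat \<Rightarrow> nat list"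
  assumes rmc: "right_markov_code N A M \<omega>"
begin

lemma rmc_inj: "inj_on \<omega> {1..M}" using rmc unfolding right_markov_code_def by blast

lemma rmc_pc: "u \<in> {1..M} \<Longrightarrow> v \<in> {1..M} \<Longrightarrow> \<omega> v = \<omega> u @ z \<Longrightarrow> \<omega> u = \<omega> v"
  using rmc unfolding right_markov_code_def is_prefix_code_def by blast

lemma rmc_code: "is_code N A (\<omega> ` {1..M})"
  using rmc unfolding right_markov_code_def is_prefix_code_def by blast

lemma rmc_ne: "i \<in> {1..M} \<Longrightarrow> \<omega> i \<noteq> []"
proof
  assume i: "i \<in> {1..M}" and e: "\<omega> i = []"
  have "[\<omega> i] = []"
    using rmc_code i e unfolding is_code_def
    by (metis (no_types, lifting) concat.simps(1) concat.simps(2) empty_iff empty_set image_eqI insert_subset list.simps(15) self_append_conv2 subsetI)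
  then show False by simp
qed

lemma rmc_adm: "i \<in> {1..M} \<Longrightarrow> adm N A (\<omega> i)"
  using rmc_code unfolding is_code_def by blast

definition L0 :: nat where "L0 = Suc (Max (length ` \<omega> ` {1..M}))"

lemma len_le: "i \<in> {1..M} \<Longrightarrow> length (\<omega> i) \<le> L0"
proof -
  assume i: "i \<in> {1..M}"
  have "length (\<omega> i) \<le> Max (length ` \<omega> ` {1..M})" by (rule Max_ge) (use i in auto)
  then show ?thesis unfolding L0_def by simp
qed

lemma L0_pos: "1 \<le> L0" by (simp add: L0_def)

lemma cc_len: "set is \<subseteq> {1..M} \<Longrightarrow> length (cc \<omega> is) \<le> length is * L0"
proof (induction "is")
  case Nil then show ?case by simp
next
  case (Cons a "is") then show ?case using len_le[of a] by simp
qed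

lemma W_len: "\<forall>i. y i \<in> {1..M} \<Longrightarrow> k \<le> length (W \<omega> y k)"
proof (induction k)
  case 0 then show ?case by simp
next
  case (Suc k)
  have "\<omega> (y k) \<noteq> []" using rmc_ne Suc.prems by blast
  then have "1 \<le> length (\<omega> (y k))" by (cases "\<omega> (y k)") auto
  then have "Suc k \<le> length (W \<omega> y k) + length (\<omega> (y k))" using Suc.IH[OF Suc.prems] by linarith
  then show ?case by (simp add: W_Suc)
qed

lemma phi_W: assumes y: "\<forall>i. y i \<in> {1..M}" and n: "n < length (W \<omega> y k)"
  shows "phi \<omega> y n = W \<omega> y k ! n"
proof -
  have n2: "n < length (W \<omega> y (Suc n))" using W_len[OF y, of "Suc n"] by simp
  show ?thesis
  proof (cases "k \<le> Suc n")
    case True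
    then obtain z where "W \<omega> y (Suc n) = W \<omega> y k @ z" using W_prefix by blast
    then show ?thesis using n unfolding phi_def by (simp add: nth_append)
  next
    case False
    then obtain z where "W \<omega> y k = W \<omega> y (Suc n) @ z" using W_prefix[of "Suc n" k] by auto
    then show ?thesis using n2 unfolding phi_def by (simp add: nth_append)
  qed
qed

lemma W_phi: assumes y: "\<forall>i. y i \<in> {1..M}" shows "W \<omega> y k = map (phi \<omega> y) [0..<length (W \<omega> y k)]"
  by (rule nth_equalityI) (simp_all add: phi_W[OF y])

lemma phi_word: assumes y: "\<forall>i. y i \<in> {1..M}" and r: "r < length (\<omega> (y i))"
  shows "phi \<omega> y (length (W \<omega> y i) + r) = \<omega> (y i) ! r"
proof -
  have "length (W \<omega> y i) + r < length (W \<omega> y (Suc i))" using r by (simp add: W_Suc)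
  then have "phi \<omega> y (length (W \<omega> y i) + r) = W \<omega> y (Suc i) ! (length (W \<omega> y i) + r)"
    using phi_W[OF y] by blast
  also have "\<dots> = \<omega> (y i) ! r" by (simp add: W_Suc nth_append)
  finally show ?thesis .
qed

lemma XC_iff: "y \<in> XA M (code_matrix A \<omega>) \<longleftrightarrow>
   (\<forall>i. y i \<in> {1..M}) \<and> (\<forall>i. A (last (\<omega> (y i))) (hd (\<omega> (y (Suc i)))))"
  unfolding XA_def code_matrix_def by auto

lemma W_ok: assumes "y \<in> XA M (code_matrix A \<omega>)"
  shows "set (W \<omega> y k) \<subseteq> {1..N} \<and> successively A (W \<omega> y k) \<and> (0 < k \<longrightarrow> last (W \<omega> y k) = last (\<omega> (y (k - 1))))"
proof (induction k)
  case 0 then show ?case by simp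
next
  case (Suc k)
  have yk: "y k \<in> {1..M}" using assms XC_iff by blast
  have ne: "\<omega> (y k) \<noteq> []" using rmc_ne yk by blast
  have a: "set (\<omega> (y k)) \<subseteq> {1..N}" "successively A (\<omega> (y k))" using adm_props rmc_adm yk by blast+
  have tr: "W \<omega> y k = [] \<or> A (last (W \<omega> y k)) (hd (\<omega> (y k)))"
  proof (cases k)
    case 0 then show ?thesis by simp
  next
    case (Suc k')
    then show ?thesis using Suc.IH assms XC_iff by auto
  qed
  show ?case using Suc.IH a ne tr by (simp add: successively_append_iff W_Suc)
qed

lemma phi_in: assumes y: "y \<in> XA M (code_matrix A \<omega>)" shows "phi \<omega> y \<in> XA N A"
proof -
  have yi: "\<forall>i. y i \<in> {1..M}" using y XC_iff by blast
  have "phi \<omega> y n \<in> {1..N} \<and> A (phi \<omega> y n) (phi \<omega> y (Suc n))" for n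
  proof -
    let ?w = "W \<omega> y (Suc (Suc n))"
    have l: "Suc n < length ?w" using W_len[OF yi, of "Suc (Suc n)"] by simp
    have e: "phi \<omega> y n = ?w ! n" "phi \<omega> y (Suc n) = ?w ! Suc n" using phi_W[OF yi] l by auto
    have ok: "set ?w \<subseteq> {1..N}" "successively A ?w" using W_ok[OF y] by blast+
    have "?w ! n \<in> {1..N}" using ok(1) l by (meson Suc_lessD nth_mem subsetD)
    moreover have "A (?w ! n) (?w ! Suc n)" using successively_nth[OF ok(2) l] .
    ultimately show ?thesis using e by simp
  qed
  then show ?thesis unfolding XA_def by blast
qed

lemma XC_of: assumes yi: "\<forall>i. y i \<in> {1..M}" and p: "phi \<omega> y \<in> XA N A"
  shows "y \<in> XA M (code_matrix A \<omega>)"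
  unfolding XC_iff
proof (intro conjI yi allI)
  fix i
  let ?p = "length (W \<omega> y (Suc i))"
  have ne1: "\<omega> (y i) \<noteq> []" "\<omega> (y (Suc i)) \<noteq> []" using rmc_ne yi by blast+
  have "last (\<omega> (y i)) = \<omega> (y i) ! (length (\<omega> (y i)) - 1)" using ne1 by (simp add: last_conv_nth)
  also have "\<dots> = phi \<omega> y (length (W \<omega> y i) + (length (\<omega> (y i)) - 1))"
    using phi_word[OF yi, of "length (\<omega> (y i)) - 1" i] ne1 by simp
  also have "\<dots> = phi \<omega> y (?p - 1)" using ne1 by (cases "\<omega> (y i)") (auto simp: W_Suc)
  finally have l: "last (\<omega> (y i)) = phi \<omega> y (?p - 1)" .
  have "hd (\<omega> (y (Suc i))) = phi \<omega> y (?p + 0)"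
    using phi_word[OF yi, of 0 "Suc i"] ne1 by (simp add: hd_conv_nth)
  then have h: "hd (\<omega> (y (Suc i))) = phi \<omega> y (Suc (?p - 1))" using ne1 by (cases "\<omega> (y i)") (auto simp: W_Suc)
  show "A (last (\<omega> (y i))) (hd (\<omega> (y (Suc i))))"
    using p unfolding XA_def l h by blast
qed


lemma prefix_cases_aux:
  assumes "take (length (u @ v1)) T = u @ v1" "take (length (u @ v2)) T = u @ v2" "length v1 \<le> length v2"
  shows "v2 = v1 @ drop (length v1) v2"
proof -
  have "take (length (u @ v1)) (u @ v2) = take (length (u @ v1)) (take (length (u @ v2)) T)"
    using assms(2) by simp
  also have "\<dots> = take (length (u @ v1)) T" using assms(3) by (simp add: min_def)
  also have "\<dots> = u @ v1" using assms(1) .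
  finally have "take (length v1) v2 = v1" by simp
  then show ?thesis by (metis append_take_drop_id)
qed

lemma take_prefix_cc: assumes "X = P @ R" "length P \<le> n" shows "take (length P) (take n X) = P"
  using assms by (simp add: min_def)

lemma decode_step:
  assumes isM: "set is \<subseteq> {1..M}" and jsM: "set js \<subseteq> {1..M}"
    and T: "take n (cc \<omega> is) = take n (cc \<omega> js)"
    and k1: "k < length is" and k2: "k < length js" and kn: "Suc k * L0 \<le> n"
    and tk: "take k is = take k js"
  shows "is ! k = js ! k"
proof -
  define u where "u = cc \<omega> (take k is)"
  have u2: "cc \<omega> (take k js) = u" using tk u_def by simp
  have "set (take k is) \<subseteq> {1..M}" using isM by (meson set_take_subset subset_trans)
  then have lu: "length u \<le> k * L0" using cc_len[of "take k is"] k1 unfolding u_def by simp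
  have ik: "is ! k \<in> {1..M}" "js ! k \<in> {1..M}" using isM jsM k1 k2 nth_mem by blast+
  have sp: "cc \<omega> xs = cc \<omega> (take k xs) @ \<omega> (xs ! k) @ cc \<omega> (drop (Suc k) xs)" if "k < length xs" for xs
  proof -
    have "cc \<omega> xs = cc \<omega> (take k xs @ drop k xs)" by simp
    also have "drop k xs = xs ! k # drop (Suc k) xs" using Cons_nth_drop_Suc[OF that] by simp
    finally show ?thesis by simp
  qed
  have d1: "cc \<omega> is = (u @ \<omega> (is ! k)) @ cc \<omega> (drop (Suc k) is)" unfolding u_def using sp[OF k1] by simp
  have d2: "cc \<omega> js = (u @ \<omega> (js ! k)) @ cc \<omega> (drop (Suc k) js)" unfolding u2[symmetric] using sp[OF k2] by simp
  have l1: "length (u @ \<omega> (is ! k)) \<le> n" using lu len_le[OF ik(1)] kn by simp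
  have l2: "length (u @ \<omega> (js ! k)) \<le> n" using lu len_le[OF ik(2)] kn by simp
  let ?T = "take n (cc \<omega> is)"
  have p1: "take (length (u @ \<omega> (is ! k))) ?T = u @ \<omega> (is ! k)" by (rule take_prefix_cc[OF d1 l1])
  have p2: "take (length (u @ \<omega> (js ! k))) ?T = u @ \<omega> (js ! k)" unfolding T by (rule take_prefix_cc[OF d2 l2])
  have "\<omega> (is ! k) = \<omega> (js ! k)"
  proof (cases "length (\<omega> (is ! k)) \<le> length (\<omega> (js ! k))")
    case True
    then show ?thesis using prefix_cases_aux[OF p1 p2 True] rmc_pc ik by metis
  next
    case False
    then show ?thesis using prefix_cases_aux[OF p2 p1] rmc_pc ik by (metis nat_le_linear)
  qed
  then show ?thesis using rmc_inj ik unfolding inj_on_def by blast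
qed

lemma decode:
  assumes isM: "set is \<subseteq> {1..M}" and jsM: "set js \<subseteq> {1..M}"
    and T: "take n (cc \<omega> is) = take n (cc \<omega> js)"
  shows "k < length is \<Longrightarrow> k < length js \<Longrightarrow> Suc k * L0 \<le> n \<Longrightarrow> take (Suc k) is = take (Suc k) js"
proof (induction k)
  case 0
  then have "is ! 0 = js ! 0" using decode_step[OF isM jsM T, of 0] by simp
  then show ?case using 0 by (simp add: take_Suc_conv_app_nth)
next
  case (Suc k)
  have "take (Suc k) is = take (Suc k) js" using Suc by simp
  then have "is ! Suc k = js ! Suc k" using decode_step[OF isM jsM T, of "Suc k"] Suc.prems by blast
  then show ?case using Suc.prems \<open>take (Suc k) is = take (Suc k) js\<close>
    by (simp add: take_Suc_conv_app_nth)
qed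

lemma W_cc: "W \<omega> y n = cc \<omega> (map y [0..<n])"
  by (simp add: W_def o_def)

lemma decode_seq:
  assumes y: "\<forall>i. y i \<in> {1..M}" and y': "\<forall>i. y' i \<in> {1..M}"
    and ag: "\<forall>i<n. phi \<omega> y i = phi \<omega> y' i" and kn: "Suc k * L0 \<le> n"
  shows "y k = y' k"
proof -
  have s1: "set (map y [0..<n]) \<subseteq> {1..M}" "set (map y' [0..<n]) \<subseteq> {1..M}" using y y' by auto
  have "take n (cc \<omega> (map y [0..<n])) = take n (cc \<omega> (map y' [0..<n]))"
  proof -
    have tk: "take n (W \<omega> z n) = map (phi \<omega> z) [0..<n]" if z: "\<forall>i. z i \<in> {1..M}" for z
    proof -
      have "take n (W \<omega> z n) = take n (map (phi \<omega> z) [0..<length (W \<omega> z n)])"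
        using W_phi[OF z, of n] by simp
      also have "\<dots> = map (phi \<omega> z) [0..<n]" using W_len[OF z, of n] by (simp add: take_map min_def)
      finally show ?thesis .
    qed
    have "take n (W \<omega> y n) = map (phi \<omega> y) [0..<n]" by (rule tk[OF y])
    moreover have "take n (W \<omega> y' n) = map (phi \<omega> y') [0..<n]" by (rule tk[OF y'])
    moreover have "map (phi \<omega> y) [0..<n] = map (phi \<omega> y') [0..<n]" using ag by simp
    ultimately show ?thesis unfolding W_cc by simp
  qed
  moreover have "k < n"
  proof -
    have "Suc k * 1 \<le> Suc k * L0" using L0_pos by (rule mult_le_mono2)
    then show ?thesis using kn by simp
  qed
  ultimately have "take (Suc k) (map y [0..<n]) = take (Suc k) (map y' [0..<n])"
    using decode[OF s1] kn by simp
  then have "take (Suc k) (map y [0..<n]) ! k = take (Suc k) (map y' [0..<n]) ! k" by simp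
  then show ?thesis using \<open>k < n\<close> by simp
qed


lemma map_upt_split: "map f [0..<a + m] = map f [0..<a] @ map (\<lambda>i. f (i + a)) [0..<m]"
proof -
  have "[0..<a + m] = [0..<a] @ [a..<a + m]" by (rule upt_add_eq_append) simp
  moreover have "map f [a..<a + m] = map (\<lambda>i. f (i + a)) [0..<m]"
    by (rule nth_equalityI) (simp_all add: add.commute)
  ultimately show ?thesis by simp
qed

lemma cond_i: "adm N A \<gamma> \<Longrightarrow> \<exists>\<eta>. adm N A \<eta> \<and> adm N A (\<gamma> @ \<eta>) \<and> (\<exists>!is. set is \<subseteq> {1..M} \<and> \<gamma> @ \<eta> = cc \<omega> is)"
  using rmc unfolding right_markov_code_def by blast

lemma adm_prefix: "x \<in> XA N A \<Longrightarrow> adm N A (map x [0..<n])"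
  unfolding adm_def by (intro disjI2 bexI[of _ x] exI[of _ 0]) simp_all

lemma L0_mult: "Suc k * L0 \<le> n \<Longrightarrow> k * L0 < n"
  using L0_pos by simp

lemma phi_surj: assumes x: "x \<in> XA N A" shows "\<exists>y \<in> XA M (code_matrix A \<omega>). phi \<omega> y = x"
proof -
  have ex: "\<forall>n. \<exists>is. set is \<subseteq> {1..M} \<and> take n (cc \<omega> is) = map x [0..<n] \<and> n \<le> length (cc \<omega> is)"
  proof
    fix n
    obtain \<eta> "is" where "set is \<subseteq> {1..M}" "map x [0..<n] @ \<eta> = cc \<omega> is"
      using cond_i[OF adm_prefix[OF x, of n]] by blast
    then show "\<exists>is. set is \<subseteq> {1..M} \<and> take n (cc \<omega> is) = map x [0..<n] \<and> n \<le> length (cc \<omega> is)"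
      by (metis (no_types, lifting) append_eq_conv_conj diff_zero le_add1 length_append length_map length_upt)
  qed
  obtain I where I: "\<forall>n. set (I n) \<subseteq> {1..M} \<and> take n (cc \<omega> (I n)) = map x [0..<n] \<and> n \<le> length (cc \<omega> (I n))"
    using choice[OF ex] by blast
  define y where "y k = I (Suc k * L0) ! k" for k
  have lenI: "k < length (I m)" if "Suc k * L0 \<le> m" for k m
  proof (rule ccontr)
    assume "\<not> k < length (I m)"
    then have "length (I m) * L0 \<le> k * L0" by simp
    then have "length (cc \<omega> (I m)) \<le> k * L0" using cc_len[of "I m"] I by (meson le_trans)
    moreover have "m \<le> length (cc \<omega> (I m))" using I by blast
    ultimately show False using L0_mult[OF that] by simp
  qed
  have claim: "I n ! k = y k" if kn: "Suc k * L0 \<le> n" for k n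
  proof -
    let ?n = "Suc k * L0"
    have "take ?n (cc \<omega> (I n)) = take ?n (take n (cc \<omega> (I n)))" using kn by (simp add: min_def)
    also have "\<dots> = map x [0..<?n]" using I kn by (simp add: take_map)
    also have "\<dots> = take ?n (cc \<omega> (I ?n))" using I by simp
    finally have "take ?n (cc \<omega> (I n)) = take ?n (cc \<omega> (I ?n))" .
    then have "take (Suc k) (I n) = take (Suc k) (I ?n)"
      using decode[of "I n" "I ?n" ?n k] I lenI kn by blast
    then have "take (Suc k) (I n) ! k = take (Suc k) (I ?n) ! k" by simp
    then show ?thesis unfolding y_def by simp
  qed
  have yM: "\<forall>k. y k \<in> {1..M}"
  proof
    fix k
    have "I (Suc k * L0) ! k \<in> set (I (Suc k * L0))" using lenI[of k "Suc k * L0"] by simp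
    then show "y k \<in> {1..M}" using I unfolding y_def by blast
  qed
  have Wy: "W \<omega> y (Suc k) = map x [0..<length (W \<omega> y (Suc k))]" for k
  proof -
    let ?n = "Suc k * L0"
    have mt: "map y [0..<Suc k] = take (Suc k) (I ?n)"
    proof (rule nth_equalityI)
      show "length (map y [0..<Suc k]) = length (take (Suc k) (I ?n))"
        using lenI[of k ?n] by simp
      fix j assume j: "j < length (map y [0..<Suc k])"
      then have "Suc j * L0 \<le> ?n" by (intro mult_le_mono1) simp
      moreover have "map y [0..<Suc k] ! j = y j" using j by (simp del: upt_Suc)
      ultimately show "map y [0..<Suc k] ! j = take (Suc k) (I ?n) ! j" using claim j by simp
    qed
    have e1: "W \<omega> y (Suc k) = cc \<omega> (take (Suc k) (I ?n))" unfolding W_cc mt ..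
    have e2: "cc \<omega> (I ?n) = cc \<omega> (take (Suc k) (I ?n)) @ cc \<omega> (drop (Suc k) (I ?n))"
      by (metis append_take_drop_id concat_append map_append)
    have "set (take (Suc k) (I ?n)) \<subseteq> {1..M}" using I by (meson set_take_subset subset_trans)
    then have l: "length (W \<omega> y (Suc k)) \<le> ?n" unfolding e1 using cc_len lenI[of k ?n] by fastforce
    have "W \<omega> y (Suc k) = take (length (W \<omega> y (Suc k))) (take ?n (cc \<omega> (I ?n)))"
      using take_prefix_cc[OF e2[folded e1] l] by simp
    also have "\<dots> = take (length (W \<omega> y (Suc k))) (map x [0..<?n])" using I by simp
    also have "\<dots> = map x [0..<length (W \<omega> y (Suc k))]" using l by (simp add: take_map)
    finally show ?thesis .
  qed
  have py: "phi \<omega> y = x"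
  proof
    fix m
    have "m < length (W \<omega> y (Suc m))" using W_len[OF yM, of "Suc m"] by simp
    then show "phi \<omega> y m = x m" unfolding phi_def by (subst Wy) simp
  qed
  have "y \<in> XA M (code_matrix A \<omega>)" using XC_of[OF yM] py x by simp
  then show ?thesis using py by blast
qed


abbreviation XC where "XC \<equiv> XA M (code_matrix A \<omega>)"

lemma XC_M: "y \<in> XC \<Longrightarrow> \<forall>i. y i \<in> {1..M}" using XC_iff by blast

lemma phi_inj: "inj_on (phi \<omega>) XC"
proof (rule inj_onI)
  fix y y' assume y: "y \<in> XC" and y': "y' \<in> XC" and e: "phi \<omega> y = phi \<omega> y'"
  show "y = y'"
  proof
    fix k show "y k = y' k" using decode_seq[OF XC_M[OF y] XC_M[OF y'], of "Suc k * L0" k] e by simp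
  qed
qed

lemma phi_image: "phi \<omega> ` XC = XA N A"
  using phi_in phi_surj by blast

lemma phi_cont: "cont XC (phi \<omega>)"
  unfolding cont_def
proof (intro ballI allI)
  fix y n assume y: "y \<in> XC"
  show "\<exists>m. \<forall>y'\<in>XC. y' \<in> cyl y m \<longrightarrow> phi \<omega> y' \<in> cyl (phi \<omega> y) n"
  proof (intro exI[of _ n] ballI impI)
    fix y' assume "y' \<in> XC" "y' \<in> cyl y n"
    then have a: "\<forall>i<n. y' i = y i" by (simp add: cyl_def)
    have "phi \<omega> y' i = phi \<omega> y i" if i: "i < n" for i
    proof -
      have eq: "map y' [0..<Suc i] = map y [0..<Suc i]" using a i by simp
      have "W \<omega> y' (Suc i) = W \<omega> y (Suc i)" unfolding W_cc eq by (rule refl)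
      then show ?thesis by (simp add: phi_def)
    qed
    then show "phi \<omega> y' \<in> cyl (phi \<omega> y) n" by (simp add: cyl_def)
  qed
qed

lemma W_shift: "W \<omega> y (Suc m) = \<omega> (y 0) @ W \<omega> (shift y) m"
  unfolding W_cc map_upt_Suc shift_def by simp

lemma phi_half: "half XC (XA N A) (phi \<omega>) (\<lambda>y. 0) (\<lambda>y. length (\<omega> (y 0)))"
  unfolding half_def
proof (intro conjI ballI allI)
  show "\<And>x. x \<in> XC \<Longrightarrow> phi \<omega> x \<in> XA N A" by (rule phi_in)
  show "cont XC (phi \<omega>)" by (rule phi_cont)
  show "lc XC (\<lambda>y. 0)" by (rule lc_const)
  show "lc XC (\<lambda>y. length (\<omega> (y 0)))" unfolding lc_def
    by (intro ballI exI[of _ 1]) (auto simp: cyl_def)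
  fix y j assume y: "y \<in> XC"
  have yi: "\<forall>i. y i \<in> {1..M}" by (rule XC_M[OF y])
  have syi: "\<forall>i. shift y i \<in> {1..M}" using yi by (simp add: shift_def)
  let ?l = "length (\<omega> (y 0))"
  have "Suc j \<le> length (W \<omega> (shift y) (Suc j))" by (rule W_len[OF syi])
  then have l: "j + ?l < length (W \<omega> y (Suc (Suc j)))" unfolding W_shift[of y "Suc j"] by simp
  have "phi \<omega> y (j + ?l) = W \<omega> y (Suc (Suc j)) ! (j + ?l)" using phi_W[OF yi l] .
  also have "\<dots> = W \<omega> (shift y) (Suc j) ! j" unfolding W_shift[of y "Suc j"]
    by (simp add: nth_append add.commute)
  also have "\<dots> = phi \<omega> (shift y) j" by (simp add: phi_def)
  finally show "phi \<omega> (shift y) (j + 0) = phi \<omega> y (j + ?l)" by simp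
qed

definition ginv where "ginv = inv_into XC (phi \<omega>)"

lemma g_props: assumes x: "x \<in> XA N A" shows "ginv x \<in> XC" "phi \<omega> (ginv x) = x"
proof -
  have "x \<in> phi \<omega> ` XC" using phi_image x by simp
  then show "ginv x \<in> XC" "phi \<omega> (ginv x) = x" unfolding ginv_def
    by (rule inv_into_into, rule f_inv_into_f)
qed

lemma g_phi: "y \<in> XC \<Longrightarrow> ginv (phi \<omega> y) = y"
  unfolding ginv_def using phi_inj by (rule inv_into_f_f)

lemma g_cont: "cont (XA N A) ginv"
  unfolding cont_def
proof (intro ballI allI)
  fix x n assume x: "x \<in> XA N A"
  show "\<exists>m. \<forall>x'\<in>XA N A. x' \<in> cyl x m \<longrightarrow> ginv x' \<in> cyl (ginv x) n"
  proof (intro exI[of _ "n * L0"] ballI impI)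
    fix x' assume x': "x' \<in> XA N A" and c: "x' \<in> cyl x (n * L0)"
    have "ginv x' k = ginv x k" if k: "k < n" for k
    proof (rule decode_seq[OF XC_M[OF g_props(1)[OF x']] XC_M[OF g_props(1)[OF x]]])
      show "\<forall>i<n * L0. phi \<omega> (ginv x') i = phi \<omega> (ginv x) i"
        using c g_props(2)[OF x] g_props(2)[OF x'] by (simp add: cyl_def)
      show "Suc k * L0 \<le> n * L0" using k by (intro mult_le_mono1) simp
    qed
    then show "ginv x' \<in> cyl (ginv x) n" by (simp add: cyl_def)
  qed
qed


lemma shift_decomp:
  assumes x: "x \<in> XA N A" and L: "1 \<le> L" and js: "set js \<subseteq> {1..M}"
    and e: "cc \<omega> js = tl (W \<omega> (ginv x) L)"
  shows "ginv (shift x) (j + length js) = ginv x (j + L)"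
proof -
  define y where "y = ginv x"
  define a where "a = length js"
  have yC: "y \<in> XC" and py: "phi \<omega> y = x" using g_props[OF x] y_def by auto
  have yi: "\<forall>i. y i \<in> {1..M}" by (rule XC_M[OF yC])
  define z where "z i = (if i < a then js ! i else y (i - a + L))" for i
  have zi: "\<forall>i. z i \<in> {1..M}"
  proof
    fix i show "z i \<in> {1..M}"
    proof (cases "i < a")
      case True then have "js ! i \<in> set js" unfolding a_def by simp
      then show ?thesis using js True unfolding z_def by auto
    next
      case False then show ?thesis using yi unfolding z_def by simp
    qed
  qed
  have mz: "map z [0..<a] = js" by (rule nth_equalityI) (simp_all add: z_def a_def)
  have sz: "(\<lambda>i. z (i + a)) = (\<lambda>i. y (i + L))" by (simp add: z_def)
  have Wz: "W \<omega> z (a + m) = cc \<omega> js @ W \<omega> (\<lambda>i. y (i + L)) m" for m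
    unfolding W_cc map_upt_split mz sz by simp
  have Wy: "W \<omega> y (L + m) = W \<omega> y L @ W \<omega> (\<lambda>i. y (i + L)) m" for m
    unfolding W_cc map_upt_split by simp
  have neL: "W \<omega> y L \<noteq> []" using W_len[OF yi, of L] L by auto
  have Wz2: "W \<omega> z (a + m) = tl (W \<omega> y (L + m))" for m
    unfolding Wz Wy e y_def[symmetric] using neL by simp
  have pz: "phi \<omega> z = shift x"
  proof
    fix n
    have l1: "n < length (W \<omega> z (a + Suc n))" using W_len[OF zi, of "a + Suc n"] by simp
    have l2: "Suc n < length (W \<omega> y (L + Suc n))" using W_len[OF yi, of "L + Suc n"] L by simp
    have "phi \<omega> z n = W \<omega> z (a + Suc n) ! n" by (rule phi_W[OF zi l1])
    also have "\<dots> = tl (W \<omega> y (L + Suc n)) ! n" by (simp only: Wz2)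
    also have "\<dots> = W \<omega> y (L + Suc n) ! Suc n" using l2 by (simp add: nth_tl)
    also have "\<dots> = phi \<omega> y (Suc n)" by (rule phi_W[OF yi l2, symmetric])
    also have "\<dots> = shift x n" using py by (simp add: shift_def)
    finally show "phi \<omega> z n = shift x n" .
  qed
  have sx: "shift x \<in> XA N A" using sinv_XA x unfolding sinv_def by blast
  have zC: "z \<in> XC" using XC_of[OF zi] pz sx by simp
  have "ginv (shift x) = z" using g_phi[OF zC] pz by simp
  then show ?thesis unfolding y_def[symmetric] a_def[symmetric] by (simp add: z_def)
qed

lemma g_half: "\<exists>k l. half (XA N A) XC ginv k l"
proof -
  obtain L where L: "1 \<le> L" "\<forall>is. length is = L \<longrightarrow> set is \<subseteq> {1..M} \<longrightarrow> adm N A (cc \<omega> is) \<longrightarrow>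
          (\<exists>js. set js \<subseteq> {1..M} \<and> tl (\<omega> (hd is)) @ cc \<omega> (tl is) = cc \<omega> js)"
    using rmc unfolding right_markov_code_def by blast
  define J where "J is = (SOME js. set js \<subseteq> {1..M} \<and> tl (\<omega> (hd is)) @ cc \<omega> (tl is) = cc \<omega> js)" for "is"
  define k2 where "k2 x = length (J (map (ginv x) [0..<L]))" for x
  have Jx: "set (J (map (ginv x) [0..<L])) \<subseteq> {1..M} \<and> cc \<omega> (J (map (ginv x) [0..<L])) = tl (W \<omega> (ginv x) L)"
    if x: "x \<in> XA N A" for x
  proof -
    let ?is = "map (ginv x) [0..<L]"
    have gi: "\<forall>i. ginv x i \<in> {1..M}" using XC_M g_props(1)[OF x] by blast
    have isM: "set ?is \<subseteq> {1..M}" using gi by auto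
    have "W \<omega> (ginv x) L = map x [0..<length (W \<omega> (ginv x) L)]"
      using W_phi[OF gi, of L] g_props(2)[OF x] by simp
    then have ad: "adm N A (cc \<omega> ?is)" unfolding W_cc[symmetric] using adm_prefix[OF x] by metis
    have "\<exists>js. set js \<subseteq> {1..M} \<and> tl (\<omega> (hd ?is)) @ cc \<omega> (tl ?is) = cc \<omega> js"
      using L(2) isM ad by simp
    then have J: "set (J ?is) \<subseteq> {1..M} \<and> tl (\<omega> (hd ?is)) @ cc \<omega> (tl ?is) = cc \<omega> (J ?is)"
      unfolding J_def by (rule someI_ex)
    have ne: "?is \<noteq> []" using L(1) by simp
    have hdM: "hd ?is \<in> {1..M}" using isM ne by (meson hd_in_set subsetD)
    have "cc \<omega> ?is = \<omega> (hd ?is) @ cc \<omega> (tl ?is)" using ne by (metis concat.simps(2) list.collapse list.simps(9))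
    then have "tl (cc \<omega> ?is) = tl (\<omega> (hd ?is)) @ cc \<omega> (tl ?is)" using rmc_ne[OF hdM] by simp
    then show ?thesis using J unfolding W_cc by simp
  qed
  have lck: "lc (XA N A) k2" unfolding lc_def
  proof
    fix x assume x: "x \<in> XA N A"
    obtain m where m: "\<forall>x'\<in>XA N A. x' \<in> cyl x m \<longrightarrow> ginv x' \<in> cyl (ginv x) L"
      using g_cont x unfolding cont_def by blast
    show "\<exists>m. \<forall>y\<in>XA N A. y \<in> cyl x m \<longrightarrow> k2 y = k2 x"
    proof (intro exI[of _ m] ballI impI)
      fix x' assume "x' \<in> XA N A" "x' \<in> cyl x m"
      then have "ginv x' \<in> cyl (ginv x) L" using m by blast
      then have eq: "map (ginv x') [0..<L] = map (ginv x) [0..<L]" by (simp add: cyl_def)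
      show "k2 x' = k2 x" unfolding k2_def eq by (rule refl)
    qed
  qed
  have "half (XA N A) XC ginv k2 (\<lambda>x. L)"
    unfolding half_def
  proof (intro conjI ballI allI)
    show "\<And>x. x \<in> XA N A \<Longrightarrow> ginv x \<in> XC" by (rule g_props(1))
    show "cont (XA N A) ginv" by (rule g_cont)
    show "lc (XA N A) k2" by (rule lck)
    show "lc (XA N A) (\<lambda>x. L)" by (rule lc_const)
    fix x j assume x: "x \<in> XA N A"
    show "ginv (shift x) (j + k2 x) = ginv x (j + L)"
      unfolding k2_def using shift_decomp[OF x L(1)] Jx[OF x] by blast
  qed
  then show ?thesis by blast
qed

lemma code_COE: "COE XC (XA N A)"
proof -
  have "homeomorphism XC (XA N A) (phi \<omega>) ginv"
    unfolding homeomorphism_def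
  proof (intro conjI ballI)
    show "\<And>y. y \<in> XC \<Longrightarrow> ginv (phi \<omega> y) = y" by (rule g_phi)
    show "phi \<omega> ` XC = XA N A" by (rule phi_image)
    show "continuous_on XC (phi \<omega>)" unfolding cont_iff by (rule phi_cont)
    show "\<And>x. x \<in> XA N A \<Longrightarrow> phi \<omega> (ginv x) = x" by (rule g_props(2))
    show "ginv ` XA N A = XC"
    proof
      show "ginv ` XA N A \<subseteq> XC" using g_props(1) by blast
      show "XC \<subseteq> ginv ` XA N A"
      proof
        fix y assume y: "y \<in> XC"
        then have "y = ginv (phi \<omega> y)" using g_phi by simp
        then show "y \<in> ginv ` XA N A" using phi_in[OF y] by blast
      qed
    qed
    show "continuous_on (XA N A) ginv" unfolding cont_iff by (rule g_cont)
  qed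
  then show ?thesis unfolding COE_def using phi_half g_half by blast
qed

end

lemma code_COE': "right_markov_code N A M \<omega> \<Longrightarrow> COE (XA N A) (XA M (code_matrix A \<omega>))"
  using code_COE COE_sym by blast


lemma elem_COE: assumes "elem_coded_equiv N A M B" shows "COE (XA N A) (XA M B)"
proof -
  obtain M1 \<omega>1 M2 \<omega>2 where r1: "right_markov_code N A M1 \<omega>1" and r2: "right_markov_code M B M2 \<omega>2"
    and tc: "top_conjugate M1 (code_matrix A \<omega>1) M2 (code_matrix B \<omega>2)"
    using assms unfolding elem_coded_equiv_def by blast
  have 1: "COE (XA N A) (XA M1 (code_matrix A \<omega>1))" by (rule code_COE'[OF r1])
  have 2: "COE (XA M1 (code_matrix A \<omega>1)) (XA M2 (code_matrix B \<omega>2))" by (rule conj_COE[OF tc])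
  have 3: "COE (XA M2 (code_matrix B \<omega>2)) (XA M B)" by (rule COE_sym[OF code_COE'[OF r2]])
  have "COE (XA N A) (XA M2 (code_matrix B \<omega>2))" by (rule COE_trans[OF 1 2 sinv_XA sinv_XA sinv_XA])
  then show ?thesis by (rule COE_trans[OF _ 3 sinv_XA sinv_XA sinv_XA])
qed

theorem mainTheorem1:
  fixes N M :: nat and A B :: "nat \<Rightarrow> nat \<Rightarrow> bool"
  assumes "irreducible_mat N A" and "\<not> permutation_mat N A"
    and "irreducible_mat M B" and "\<not> permutation_mat M B"
    and "coded_equiv N A M B"
  shows "cont_orbit_equiv N A M B"
proof -
  obtain ch :: "(nat \<times> (nat \<Rightarrow> nat \<Rightarrow> bool)) list" where ch: "ch \<noteq> []" "hd ch = (N, A)" "last ch = (M, B)"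
    "\<forall>k < length ch - 1. elem_coded_equiv (fst (ch ! k)) (snd (ch ! k)) (fst (ch ! Suc k)) (snd (ch ! Suc k))"
    using assms(5) unfolding coded_equiv_def by blast
  have P: "k < length ch \<Longrightarrow> COE (XA N A) (XA (fst (ch ! k)) (snd (ch ! k)))" for k
  proof (induction k)
    case 0
    have "ch ! 0 = (N, A)" using ch(1,2) by (simp add: hd_conv_nth)
    then show ?case using COE_refl[OF sinv_XA] by simp
  next
    case (Suc k)
    have "COE (XA N A) (XA (fst (ch ! k)) (snd (ch ! k)))" using Suc by simp
    moreover have "COE (XA (fst (ch ! k)) (snd (ch ! k))) (XA (fst (ch ! Suc k)) (snd (ch ! Suc k)))"
      using elem_COE ch(4) Suc.prems by simp
    ultimately show ?case using COE_trans sinv_XA by blast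
  qed
  have "ch ! (length ch - 1) = (M, B)" using ch(1,3) by (simp add: last_conv_nth)
  then have "COE (XA N A) (XA M B)" using P[of "length ch - 1"] ch(1) by simp
  then show ?thesis unfolding coe_iff .
qed

end
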